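(* Assume $S\times M\neq\emptyset$, let $\varepsilon(t)=1/t^p$ on $[t_0,+\infty[$ with $p\in\,]0,1]$ and $t_0>0$, let $(x,\lambda):[t_0,+\infty[\ \to X\times Y$ be a solution of (AHT) with this $\varepsilon$, and for each $t\ge t_0$ let $(x_t,\lambda_t)$ be the unique zero of $T_t=T+\varepsilon(t)\mathrm{id}$. Then, as $t\to+\infty$, \[ \Big\|(\dot x(t),\dot\lambda(t))+\tfrac{1}{t^p}((x(t),\lambda(t))-(x_t,\lambda_t))\Big\|^2=\mathcal{O}\Big(e^{-2\rho(t)}+\tfrac{1}{t^{2p}}\Big),\qquad \|T(x(t),\lambda(t))-T(x_t,\lambda_t)\|^2=\mathcal{O}\Big(e^{-2\rho(t)}+\tfrac{1}{t^{2p}}\Big). \]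
   Context: $X,Y$ are real Hilbert spaces; $X\times Y$ carries the product inner product and norm $\|\cdot\|$. Standing assumptions: $f:X\to\mathbb{R}$ is convex and continuously differentiable with $\nabla f$ Lipschitz continuous on bounded subsets of $X$; $A:X\to Y$ is linear and continuous with adjoint $A^*$; $b\in Y$. $L(x,\lambda)=f(x)+\langle\lambda,Ax-b\rangle_Y$ and $T(x,\lambda)=(\nabla f(x)+A^*\lambda,\ b-Ax)$. $S$ is the set of optimal solutions of $\min\{f(x):Ax=b\}$, $M$ the set of Lagrange multipliers; $S\times M$ is the set of saddle points of $L$, equal to the zero set of $T$. $T_t=T+\varepsilon(t)\mathrm{id}$ is $\varepsilon(t)$-strongly monotone with unique zero $(x_t,\lambda_t)$. $\rho(t)=\int_{t_0}^t\varepsilon(\tau)\,d\tau$. (AHT) is the system $\dot x+\nabla f(x)+A^*\lambda+\varepsilon(t)x=0$, $\dot\lambda+b-Ax+\varepsilon(t)\lambda=0$; a solution is a continuously differentiable $(x,\lambda):[t_0,+\infty[\ \to X\times Y$ satisfying it on $[t_0,+\infty[$ (existence and uniqueness for every initial datum is assumed). *)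

theory Defs
  imports "HOL-Analysis.Analysis" "HOL-Library.Landau_Symbols"
begin

definition opt_sol :: "('a \<Rightarrow> real) \<Rightarrow> ('a \<Rightarrow> 'b) \<Rightarrow> 'b \<Rightarrow> 'a set" where
  "opt_sol f A b = {x. A x = b \<and> (\<forall>y. A y = b \<longrightarrow> f x \<le> f y)}"

definition lagr_mult :: "('a::real_vector \<Rightarrow> real) \<Rightarrow> ('a \<Rightarrow> 'a) \<Rightarrow> ('a \<Rightarrow> 'b) \<Rightarrow> ('b \<Rightarrow> 'a) \<Rightarrow> 'b \<Rightarrow> 'b set"
  where
  "lagr_mult f gradf A Aadj b = {lam. \<exists>x \<in> opt_sol f A b. gradf x + Aadj lam = 0}"

definition Top :: "('a::real_vector \<Rightarrow> 'a) \<Rightarrow> ('a \<Rightarrow> 'b::real_vector) \<Rightarrow> ('b \<Rightarrow> 'a) \<Rightarrow> 'b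
    \<Rightarrow> 'a \<times> 'b \<Rightarrow> 'a \<times> 'b" where
  "Top gradf A Aadj b z = (gradf (fst z) + Aadj (snd z), b - A (fst z))"

end

theory Submission
  imports Defs
begin

lemma grad_ineq:
  fixes f :: "'a::real_inner \<Rightarrow> real"
  assumes cv: "convex_on UNIV f"
    and fg: "\<And>u. (f has_derivative (\<lambda>h. inner (gradf u) h)) (at u)"
  shows "f y - f x \<ge> inner (gradf x) (y - x)"
proof -
  define g where "g s = f (x + s *\<^sub>R (y - x))" for s :: real
  have cg: "convex_on UNIV g"
  proof (rule convex_onI)
    fix t a c :: real assume t: "0 < t" "t < 1"
    have eq: "x + ((1 - t) *\<^sub>R a + t *\<^sub>R c) *\<^sub>R (y - x)
        = (1 - t) *\<^sub>R (x + a *\<^sub>R (y - x)) + t *\<^sub>R (x + c *\<^sub>R (y - x))"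
      by (simp add: algebra_simps)
    show "g ((1 - t) *\<^sub>R a + t *\<^sub>R c) \<le> (1 - t) * g a + t * g c"
      unfolding g_def eq using convex_onD[OF cv, of t] t by auto
  qed auto
  have dg: "(g has_field_derivative inner (gradf x) (y - x)) (at 0 within UNIV)"
  proof -
    have "((\<lambda>s. x + s *\<^sub>R (y - x)) has_derivative (\<lambda>s. s *\<^sub>R (y - x))) (at 0)"
      by (auto intro!: derivative_eq_intros)
    from has_derivative_compose[OF this fg[of "x + 0 *\<^sub>R (y - x)"]]
    have "(g has_derivative (\<lambda>s. inner (gradf x) (s *\<^sub>R (y - x)))) (at 0)"
      unfolding g_def[abs_def] by (simp add: o_def)
    then show ?thesis
      by (simp add: has_field_derivative_def mult.commute[of _ "inner (gradf x) (y - x)"])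
  qed
  have "g 1 - g 0 \<ge> inner (gradf x) (y - x) * (1 - 0)"
    by (rule convex_on_imp_above_tangent[OF cg]) (use dg in auto)
  then show ?thesis by (simp add: g_def)
qed

lemma grad_mono:
  fixes f :: "'a::real_inner \<Rightarrow> real"
  assumes cv: "convex_on UNIV f"
    and fg: "\<And>u. (f has_derivative (\<lambda>h. inner (gradf u) h)) (at u)"
  shows "inner (gradf x - gradf y) (x - y) \<ge> 0"
proof -
  have "f y - f x \<ge> inner (gradf x) (y - x)" "f x - f y \<ge> inner (gradf y) (x - y)"
    using grad_ineq[OF cv fg] by auto
  then show ?thesis by (simp add: inner_diff_left inner_diff_right inner_commute)
qed

lemma adj_diff:
  fixes A :: "'a::real_inner \<Rightarrow> 'b::real_inner"
  assumes A_adj: "\<And>u w. inner (A u) w = inner u (Aadj w)"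
  shows "Aadj (w1 - w2) = Aadj w1 - Aadj w2"
proof -
  have "inner u (Aadj (w1 - w2) - (Aadj w1 - Aadj w2)) = 0" for u
    by (simp add: inner_diff_right flip: A_adj)
  from this[of "Aadj (w1 - w2) - (Aadj w1 - Aadj w2)"] show ?thesis by simp
qed

lemma adj_bound:
  fixes A :: "'a::real_inner \<Rightarrow> 'b::real_inner"
  assumes A_lin: "bounded_linear A"
    and A_adj: "\<And>u w. inner (A u) w = inner u (Aadj w)"
  obtains K where "K > 0" "\<And>w. norm (Aadj w) \<le> K * norm w"
proof -
  obtain K where K: "K > 0" "\<And>u. norm (A u) \<le> K * norm u"
    using bounded_linear.pos_bounded[OF A_lin] by (auto simp: mult.commute)
  have "norm (Aadj w) \<le> K * norm w" for w
  proof (cases "Aadj w = 0")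
    case False
    have "norm (Aadj w) * norm (Aadj w) = inner (Aadj w) (Aadj w)"
      by (simp add: norm_eq_sqrt_inner)
    also have "\<dots> = inner (A (Aadj w)) w"
      by (simp only: A_adj)
    also have "\<dots> \<le> norm (A (Aadj w)) * norm w" by (rule norm_cauchy_schwarz)
    also have "\<dots> \<le> (K * norm (Aadj w)) * norm w"
      by (rule mult_right_mono[OF K(2)]) simp
    finally have "norm (Aadj w) * norm (Aadj w) \<le> (K * norm w) * norm (Aadj w)"
      by (simp only: ac_simps)
    moreover have "norm (Aadj w) > 0" using False by simp
    ultimately show ?thesis by (meson mult_le_cancel_right_pos)
  next
    case True
    then show ?thesis using K(1) by simp
  qed
  with K(1) show ?thesis using that by blast
qed

lemma Top_mono:
  fixes f :: "'a::real_inner \<Rightarrow> real" and A :: "'a \<Rightarrow> 'b::real_inner"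
  assumes cv: "convex_on UNIV f"
    and fg: "\<And>u. (f has_derivative (\<lambda>h. inner (gradf u) h)) (at u)"
    and A_lin: "bounded_linear A"
    and A_adj: "\<And>u w. inner (A u) w = inner u (Aadj w)"
  shows "inner (Top gradf A Aadj b u - Top gradf A Aadj b v) (u - v) \<ge> 0"
proof -
  obtain x1 l1 x2 l2 where uv: "u = (x1, l1)" "v = (x2, l2)" by (cases u, cases v) auto
  have lin: "A x2 - A x1 = - A (x1 - x2)"
    using linear_diff[OF bounded_linear.linear[OF A_lin]] by simp
  have "inner (Top gradf A Aadj b u - Top gradf A Aadj b v) (u - v)
     = inner (gradf x1 - gradf x2) (x1 - x2) + inner (Aadj (l1 - l2)) (x1 - x2)
       + inner (A x2 - A x1) (l1 - l2)"
    by (simp add: uv Top_def adj_diff[OF A_adj] algebra_simps inner_diff_left inner_add_left)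
  moreover have "inner (Aadj (l1 - l2)) (x1 - x2) = inner (A (x1 - x2)) (l1 - l2)"
    by (metis A_adj inner_commute)
  moreover have "inner (A x2 - A x1) (l1 - l2) = - inner (A (x1 - x2)) (l1 - l2)"
    unfolding lin by (rule inner_minus_left)
  moreover have "inner (gradf x1 - gradf x2) (x1 - x2) \<ge> 0" by (rule grad_mono[OF cv fg])
  ultimately show ?thesis by linarith
qed

lemma Top_lip:
  fixes A :: "'a::real_inner \<Rightarrow> 'b::real_inner"
  assumes A_lin: "bounded_linear A"
    and A_adj: "\<And>u w. inner (A u) w = inner u (Aadj w)"
    and L0: "L \<ge> 0" and L: "\<forall>x\<in>B. \<forall>y\<in>B. norm (gradf x - gradf y) \<le> L * norm (x - y)"
  obtains K where "\<And>u v. fst u \<in> B \<Longrightarrow> fst v \<in> B \<Longrightarrow>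
      norm (Top gradf A Aadj b u - Top gradf A Aadj b v) \<le> K * norm (u - v)"
proof -
  obtain K1 where K1: "K1 > 0" "\<And>u. norm (A u) \<le> K1 * norm u"
    using bounded_linear.pos_bounded[OF A_lin] by (auto simp: mult.commute)
  obtain K2 where K2: "K2 > 0" "\<And>w. norm (Aadj w) \<le> K2 * norm w"
    using adj_bound[OF A_lin A_adj] by blast
  have "norm (Top gradf A Aadj b u - Top gradf A Aadj b v) \<le> (L + K2 + K1) * norm (u - v)"
    if "fst u \<in> B" "fst v \<in> B" for u v
  proof -
    obtain x1 l1 x2 l2 where uv: "u = (x1, l1)" "v = (x2, l2)" by (cases u, cases v) auto
    have lin: "A x2 - A x1 = A (x2 - x1)"
      using linear_diff[OF bounded_linear.linear[OF A_lin]] by simp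
    have n1: "norm (x1 - x2) \<le> norm (u - v)" "norm (l1 - l2) \<le> norm (u - v)"
      using norm_fst_le[of "x1 - x2" "l1 - l2"] norm_snd_le[of "l1 - l2" "x1 - x2"]
      by (auto simp: uv)
    have "Top gradf A Aadj b u - Top gradf A Aadj b v
        = (gradf x1 - gradf x2 + Aadj (l1 - l2), A (x2 - x1))"
      by (simp add: uv Top_def adj_diff[OF A_adj] lin[symmetric] algebra_simps)
    then have "norm (Top gradf A Aadj b u - Top gradf A Aadj b v)
        \<le> norm (gradf x1 - gradf x2) + norm (Aadj (l1 - l2)) + norm (A (x2 - x1))"
      using norm_Pair_le[of "gradf x1 - gradf x2 + Aadj (l1 - l2)" "A (x2 - x1)"]
        norm_triangle_ineq[of "gradf x1 - gradf x2" "Aadj (l1 - l2)"] by simp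
    also have "\<dots> \<le> L * norm (x1 - x2) + K2 * norm (l1 - l2) + K1 * norm (x2 - x1)"
      using L that uv K1(2)[of "x2 - x1"] K2(2)[of "l1 - l2"] by (intro add_mono) auto
    also have "\<dots> \<le> L * norm (u - v) + K2 * norm (u - v) + K1 * norm (u - v)"
      using n1 L0 K1(1) K2(1) norm_minus_commute[of x2 x1]
      by (intro add_mono mult_left_mono) auto
    finally show ?thesis by (simp add: algebra_simps)
  qed
  then show ?thesis using that by blast
qed

lemma dini_mono:
  fixes F :: "real \<Rightarrow> real"
  assumes ab: "a \<le> b" and cont: "continuous_on {a..b} F"
    and loc: "\<And>t \<eta>. a \<le> t \<Longrightarrow> t < b \<Longrightarrow> \<eta> > 0 \<Longrightarrow>
        eventually (\<lambda>h. F (t + h) \<le> F t + \<eta> * h) (at_right 0)"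
  shows "F b \<le> F a"
proof -
  have main: "F b \<le> F a + \<eta> * (b - a)" if eta: "\<eta> > 0" for \<eta>
  proof -
    define C where "C = {s \<in> {a..b}. F s \<le> F a + \<eta> * (s - a)}"
    have "closed C" unfolding C_def
      by (rule continuous_on_closed_Collect_le[OF cont]) (auto intro!: continuous_intros)
    moreover have "a \<in> C" using ab by (simp add: C_def)
    moreover have bdd: "bdd_above C" unfolding C_def by (auto intro: bdd_aboveI[of _ b])
    ultimately have sC: "Sup C \<in> C" using closed_contains_Sup by blast
    show ?thesis
    proof (cases "Sup C < b")
      case True
      define s where "s = Sup C"
      have s: "a \<le> s" "s < b" "F s \<le> F a + \<eta> * (s - a)"
        using sC True by (auto simp: C_def s_def)
      have e3: "eventually (\<lambda>h. h < b - s) (at_right (0::real))"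
        using s(2) unfolding eventually_at_right_field by (intro exI[of _ "b - s"]) auto
      have "eventually (\<lambda>h. F (s + h) \<le> F s + \<eta> * h \<and> 0 < h \<and> h < b - s) (at_right 0)"
        using loc[OF s(1) s(2) eta] eventually_at_right_less[of "0::real"] e3
        by (intro eventually_conj) auto
      then obtain h where h: "F (s + h) \<le> F s + \<eta> * h" "0 < h" "h < b - s"
        using eventually_happens[of _ "at_right (0::real)"] by auto
      have "s + h \<in> C"
        using h s by (auto simp: C_def algebra_simps)
      then have "s + h \<le> s" unfolding s_def using bdd by (rule cSup_upper)
      then show ?thesis using h by simp
    next
      case False
      then have "Sup C = b" using sC by (auto simp: C_def)
      then show ?thesis using sC by (auto simp: C_def)
    qed
  qed
  show ?thesis
  proof (rule field_le_epsilon)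
    fix e :: real assume "e > 0"
    have "F b \<le> F a + (e / (b - a + 1)) * (b - a)"
      using main[of "e / (b - a + 1)"] \<open>e > 0\<close> ab by auto
    also have "(e / (b - a + 1)) * (b - a) \<le> e"
      using \<open>e > 0\<close> ab by (simp add: field_simps)
    finally show "F b \<le> F a + e" by simp
  qed
qed

lemma dq_to_dini:
  fixes F Y :: "real \<Rightarrow> real"
  assumes "eventually (\<lambda>h. (F (t + h) - F t) / h \<le> Y h) (at_right 0)"
    and "(Y \<longlongrightarrow> Q) (at_right 0)" and "Q \<le> 0" and "\<eta> > 0"
  shows "eventually (\<lambda>h. F (t + h) \<le> F t + \<eta> * h) (at_right 0)"
proof -
  have "eventually (\<lambda>h. Y h < \<eta>) (at_right 0)"
    using order_tendstoD(2)[OF assms(2), of \<eta>] assms by auto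
  with assms(1) eventually_at_right_less[of "0::real"]
  show ?thesis
  proof eventually_elim
    case (elim h)
    then have "(F (t + h) - F t) / h < \<eta>" by linarith
    with elim show ?case by (simp add: divide_less_eq)
  qed
qed

lemma dq_lim:
  fixes G :: "real \<Rightarrow> 'v::real_normed_vector"
  assumes "(G has_vector_derivative D) (at t within {t0..})" and "t0 \<le> t"
  shows "((\<lambda>h. (1 / h) *\<^sub>R (G (t + h) - G t)) \<longlongrightarrow> D) (at_right 0)"
proof -
  have "(G has_vector_derivative D) (at t within {t<..})"
    by (rule has_vector_derivative_within_subset[OF assms(1)]) (use assms(2) in auto)
  then have "((\<lambda>y. ((G y - G t) - (y - t) *\<^sub>R D) /\<^sub>R norm (y - t)) \<longlongrightarrow> 0) (at_right t)"
    unfolding has_vector_derivative_def has_derivative_at_within by simp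
  then have "((\<lambda>y. ((G y - G t) - (y - t) *\<^sub>R D) /\<^sub>R norm (y - t) + D) \<longlongrightarrow> 0 + D) (at_right t)"
    by (intro tendsto_add) auto
  moreover have "eventually (\<lambda>y. ((G y - G t) - (y - t) *\<^sub>R D) /\<^sub>R norm (y - t) + D
      = (1 / (y - t)) *\<^sub>R (G y - G t)) (at_right t)"
    using eventually_at_right_less[of t]
    by eventually_elim (simp add: scaleR_diff_right inverse_eq_divide)
  ultimately have "((\<lambda>y. (1 / (y - t)) *\<^sub>R (G y - G t)) \<longlongrightarrow> D) (at_right t)"
    by (subst (asm) tendsto_cong) auto
  then have "(((\<lambda>y. (1 / (y - t)) *\<^sub>R (G y - G t)) \<circ> (\<lambda>h. h + t)) \<longlongrightarrow> D) (at_right 0)"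
    by (simp add: tendsto_compose_filtermap at_right_to_0[of t, symmetric])
  then show ?thesis by (simp add: o_def add.commute)
qed

lemma inner_self_deriv:
  fixes G :: "real \<Rightarrow> 'v::real_inner"
  assumes "(G has_vector_derivative D) (at t within S)"
  shows "((\<lambda>s. inner (G s) (G s)) has_real_derivative 2 * inner (G t) D) (at t within S)"
proof -
  have "((\<lambda>s. inner (G s) (G s)) has_vector_derivative (inner (G t) D + inner D (G t))) (at t within S)"
    by (rule bounded_bilinear.has_vector_derivative[OF bounded_bilinear_inner assms assms])
  then show ?thesis
    by (simp add: has_real_derivative_iff_has_vector_derivative inner_commute[of D])
qed

lemma cont_shift:
  fixes G :: "real \<Rightarrow> 'v::topological_space"
  assumes "continuous_on {t0..} G" "t0 \<le> t"
  shows "((\<lambda>h. G (t + h)) \<longlongrightarrow> G t) (at_right 0)"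
proof -
  have "(G \<longlongrightarrow> G t) (at t within {t0..})"
    using assms by (simp add: continuous_on_def)
  then have "(G \<longlongrightarrow> G t) (at_right t)"
    by (rule tendsto_within_subset) (use assms(2) in auto)
  then have "((G \<circ> (\<lambda>h. h + t)) \<longlongrightarrow> G t) (at_right 0)"
    by (simp add: tendsto_compose_filtermap at_right_to_0[of t, symmetric])
  then show ?thesis by (simp add: o_def add.commute)
qed

lemma real_dq_lim:
  fixes G :: "real \<Rightarrow> real"
  assumes "(G has_real_derivative D) (at t within {t0..})" and "t0 \<le> t"
  shows "((\<lambda>h. (G (t + h) - G t) / h) \<longlongrightarrow> D) (at_right 0)"
  using dq_lim[OF assms(1)[unfolded has_real_derivative_iff_has_vector_derivative] assms(2)]
  by simp

lemma real_le_norm_add_pos: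
  fixes a c :: real
  assumes "0 < a" "0 \<le> c"
  shows "c \<le> norm (a + c)"
  using assms by simp

lemma step_ineq:
  fixes a a1 D w \<tau> r :: "'v::real_inner"
  assumes h: "h > 0" and d: "a1 - a = - \<tau> - w" and mon: "inner \<tau> D \<ge> 0"
    and lip: "norm \<tau> \<le> KL * norm D" and r: "r = a - (1 / h) *\<^sub>R D"
  shows "(norm a1)\<^sup>2 - (norm a)\<^sup>2 \<le> h * (2 * KL * norm ((1 / h) *\<^sub>R D) * norm r
      - 2 * inner ((1 / h) *\<^sub>R w) a
      + norm (a1 - a) * (KL * norm ((1 / h) *\<^sub>R D) + norm ((1 / h) *\<^sub>R w)))"
proof -
  define dd where "dd = a1 - a"
  have a1: "a1 = a + dd" by (simp add: dd_def)
  have sq: "(norm a1)\<^sup>2 - (norm a)\<^sup>2 = 2 * inner dd a + (norm dd)\<^sup>2"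
    unfolding a1 power2_norm_eq_inner by (simp add: inner_add_left inner_add_right inner_commute)
  have ida: "inner dd a = - inner \<tau> a - inner w a"
    using d by (simp add: dd_def inner_diff_left inner_minus_left)
  have ar: "a = r + (1 / h) *\<^sub>R D" using r by simp
  have "inner \<tau> a = inner \<tau> r + (1 / h) * inner \<tau> D"
    unfolding ar by (simp add: inner_add_right)
  moreover have "(1 / h) * inner \<tau> D \<ge> 0" using h mon by simp
  moreover have "inner \<tau> r \<ge> - (norm \<tau> * norm r)"
    using norm_cauchy_schwarz[of "- \<tau>" r] by (simp add: inner_minus_left)
  moreover have "norm \<tau> * norm r \<le> KL * norm D * norm r"
    using lip by (simp add: mult_right_mono)
  ultimately have t1: "inner \<tau> a \<ge> - (KL * norm D * norm r)" by linarith
  have nd: "norm dd \<le> KL * norm D + norm w"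
  proof -
    have "dd = - (\<tau> + w)" using d by (simp add: dd_def)
    then have "norm dd = norm (\<tau> + w)" by (simp only: norm_minus_cancel)
    also have "\<dots> \<le> norm \<tau> + norm w" by (rule norm_triangle_ineq)
    finally show ?thesis using lip by linarith
  qed
  have nd2: "(norm dd)\<^sup>2 \<le> norm dd * (KL * norm D + norm w)"
    unfolding power2_eq_square by (rule mult_left_mono[OF nd]) simp
  have e1: "h * norm ((1 / h) *\<^sub>R D) = norm D" using h by simp
  have e2: "h * norm ((1 / h) *\<^sub>R w) = norm w" using h by simp
  have e3: "h * inner ((1 / h) *\<^sub>R w) a = inner w a" using h by simp
  have "h * (2 * KL * norm ((1 / h) *\<^sub>R D) * norm r
      - 2 * inner ((1 / h) *\<^sub>R w) a
      + norm (a1 - a) * (KL * norm ((1 / h) *\<^sub>R D) + norm ((1 / h) *\<^sub>R w)))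
    = 2 * KL * (h * norm ((1 / h) *\<^sub>R D)) * norm r - 2 * (h * inner ((1 / h) *\<^sub>R w) a)
      + norm dd * (KL * (h * norm ((1 / h) *\<^sub>R D)) + h * norm ((1 / h) *\<^sub>R w))"
    by (simp add: dd_def algebra_simps)
  also have "\<dots> = 2 * KL * norm D * norm r - 2 * inner w a + norm dd * (KL * norm D + norm w)"
    by (simp only: e1 e2 e3)
  finally show ?thesis using sq ida t1 nd2 by linarith
qed

lemma powr_deriv_within:
  fixes s r :: real
  assumes "s > 0"
  shows "((\<lambda>s. s powr r) has_real_derivative r * s powr (r - 1)) (at s within S)"
  using has_real_derivative_powr[OF assms] by (rule has_field_derivative_at_within)

lemma e_deriv:
  fixes s p :: real
  assumes "s > 0"
  shows "((\<lambda>s. 1 / s powr p) has_real_derivative (- (p * s powr (p - 1)) / (s powr p)\<^sup>2)) (at s within S)"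
  using assms
  by (auto intro!: derivative_eq_intros powr_deriv_within simp: power2_eq_square)

lemma alpha_deriv:
  fixes s p :: real
  assumes "s > 0"
  shows "((\<lambda>s. (s powr p)\<^sup>2 / 2) has_real_derivative (s powr p * (p * s powr (p - 1)))) (at s within S)"
  using assms
  by (auto intro!: derivative_eq_intros powr_deriv_within simp: power2_eq_square)

lemma theta1_deriv:
  fixes s p :: real
  assumes "s > 0"
  shows "((\<lambda>s. p * s powr (p - 1)) has_real_derivative (p * ((p - 1) * s powr (p - 2)))) (at s within S)"
  using assms
  by (auto intro!: derivative_eq_intros powr_deriv_within simp: algebra_simps)

theorem proposition4p10:
  fixes f :: "'a::{real_inner,complete_space} \<Rightarrow> real"
    and gradf :: "'a \<Rightarrow> 'a"
    and A :: "'a \<Rightarrow> 'b::{real_inner,complete_space}"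
    and Aadj :: "'b \<Rightarrow> 'a"
    and b :: 'b
    and p t0 :: real
    and x x' :: "real \<Rightarrow> 'a" and lam lam' :: "real \<Rightarrow> 'b"
    and z :: "real \<Rightarrow> 'a \<times> 'b"
  assumes f_convex: "convex_on UNIV f"
    and f_grad: "\<And>u. (f has_derivative (\<lambda>h. inner (gradf u) h)) (at u)"
    and grad_cont: "continuous_on UNIV gradf"
    and grad_lip: "\<And>B. bounded B \<Longrightarrow>
        \<exists>L. \<forall>u\<in>B. \<forall>v\<in>B. norm (gradf u - gradf v) \<le> L * norm (u - v)"
    and A_lin: "bounded_linear A"
    and A_adj: "\<And>u w. inner (A u) w = inner u (Aadj w)"
    and SM_nonempty: "opt_sol f A b \<times> lagr_mult f gradf A Aadj b \<noteq> {}"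
    and p_pos: "0 < p" and p_le: "p \<le> 1" and t0_pos: "0 < t0"
    and x_deriv: "\<And>t. t \<ge> t0 \<Longrightarrow> (x has_vector_derivative x' t) (at t within {t0..})"
    and lam_deriv: "\<And>t. t \<ge> t0 \<Longrightarrow> (lam has_vector_derivative lam' t) (at t within {t0..})"
    and x'_cont: "continuous_on {t0..} x'"
    and lam'_cont: "continuous_on {t0..} lam'"
    and ode_x: "\<And>t. t \<ge> t0 \<Longrightarrow>
        x' t + gradf (x t) + Aadj (lam t) + (1 / t powr p) *\<^sub>R x t = 0"
    and ode_lam: "\<And>t. t \<ge> t0 \<Longrightarrow>
        lam' t + (b - A (x t)) + (1 / t powr p) *\<^sub>R lam t = 0"
    and z_zero: "\<And>t. t \<ge> t0 \<Longrightarrow> Top gradf A Aadj b (z t) + (1 / t powr p) *\<^sub>R z t = 0"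
  shows "(\<lambda>t. (norm ((x' t, lam' t) + (1 / t powr p) *\<^sub>R ((x t, lam t) - z t)))\<^sup>2)
           \<in> O[at_top](\<lambda>t. exp (- 2 * integral {t0..t} (\<lambda>s. 1 / s powr p)) + 1 / t powr (2 * p)) \<and>
         (\<lambda>t. (norm (Top gradf A Aadj b (x t, lam t) - Top gradf A Aadj b (z t)))\<^sup>2)
           \<in> O[at_top](\<lambda>t. exp (- 2 * integral {t0..t} (\<lambda>s. 1 / s powr p)) + 1 / t powr (2 * p))"
proof -
  define Tm where "Tm = Top gradf A Aadj b"
  define U where "U t = (x t, lam t)" for t
  define V where "V t = (x' t, lam' t)" for t
  define e where "e t = 1 / t powr p" for t :: real
  have mono: "inner (Tm u - Tm v) (u - v) \<ge> 0" for u v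
    unfolding Tm_def by (rule Top_mono[OF f_convex f_grad A_lin A_adj])
  have TmU: "Tm (U t) = (gradf (x t) + Aadj (lam t), b - A (x t))" for t
    by (simp add: Tm_def U_def Top_def)
  have ode: "V t = - (Tm (U t) + e t *\<^sub>R U t)" if "t \<ge> t0" for t
    using ode_x[OF that] ode_lam[OF that]
    by (simp add: Tm_def Top_def V_def U_def e_def prod_eq_iff eq_neg_iff_add_eq_0 algebra_simps)
  have Uder: "(U has_vector_derivative V t) (at t within {t0..})" if "t \<ge> t0" for t
    unfolding U_def[abs_def] V_def
    by (rule has_vector_derivative_Pair[OF x_deriv[OF that] lam_deriv[OF that]])
  have Ucont: "continuous_on {t0..} U"
    by (rule continuous_on_vector_derivative) (use Uder in auto)
  have Vcont: "continuous_on {t0..} V"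
    unfolding V_def by (intro continuous_on_Pair x'_cont lam'_cont)
  have epos: "e t > 0" if "t \<ge> t0" for t
    using that t0_pos by (simp add: e_def)
  obtain zs where zs: "Tm zs = 0"
  proof -
    obtain xs ls where "xs \<in> opt_sol f A b" "ls \<in> lagr_mult f gradf A Aadj b"
      using SM_nonempty by auto
    then obtain xt where "xt \<in> opt_sol f A b" "gradf xt + Aadj ls = 0"
      by (auto simp: lagr_mult_def)
    then have "Tm (xt, ls) = 0" by (simp add: Tm_def Top_def opt_sol_def zero_prod_def)
    then show ?thesis using that by blast
  qed
  have zbound: "norm (z t) \<le> norm zs" if "t \<ge> t0" for t
  proof -
    have Tz: "Tm (z t) = - (e t *\<^sub>R z t)"
      using z_zero[OF that] by (simp add: Tm_def e_def eq_neg_iff_add_eq_0)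
    have "0 \<le> inner (Tm (z t) - Tm zs) (z t - zs)" by (rule mono)
    also have "\<dots> = - e t * (inner (z t) (z t) - inner (z t) zs)"
      by (simp add: Tz zs inner_diff_right algebra_simps)
    finally have "inner (z t) (z t) \<le> inner (z t) zs"
      using epos[OF that] by (simp add: mult_le_0_iff)
    also have "\<dots> \<le> norm (z t) * norm zs" by (rule norm_cauchy_schwarz)
    finally have "norm (z t) * norm (z t) \<le> norm zs * norm (z t)"
      by (simp add: power2_norm_eq_inner[symmetric] power2_eq_square mult.commute)
    then show ?thesis
      by (cases "norm (z t) = 0") (auto simp: mult_le_cancel_right)
  qed
  define K0 where "K0 = max ((norm (U t0 - zs))\<^sup>2) ((norm zs)\<^sup>2)"
  have gbound: "(norm (U t - zs))\<^sup>2 \<le> K0" if "t \<ge> t0" for t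
  proof -
    define g where "g s = inner (U s - zs) (U s - zs)" for s
    have gder: "(g has_real_derivative 2 * inner (U s - zs) (V s)) (at s within {t0..})"
      if "s \<ge> t0" for s
      unfolding g_def[abs_def]
      by (rule inner_self_deriv) (auto intro!: derivative_eq_intros Uder[OF that])
    have gcont: "continuous_on {t0..} g"
      unfolding g_def[abs_def] by (intro continuous_intros Ucont)
    have gneg: "2 * inner (U s - zs) (V s) \<le> e s * ((norm zs)\<^sup>2 - g s)" if "s \<ge> t0" for s
    proof -
      have "2 * inner (U s - zs) (V s)
          = - 2 * inner (Tm (U s) - Tm zs) (U s - zs) - e s * (2 * inner (U s) (U s - zs))"
        by (simp add: ode[OF that] zs inner_add_right inner_minus_right inner_commute algebra_simps)
      also have "\<dots> \<le> - e s * (2 * inner (U s) (U s - zs))"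
        using mono[of "U s" zs] by simp
      also have "2 * inner (U s) (U s - zs) = inner (U s) (U s) + g s - inner zs zs"
        by (simp add: g_def inner_diff_left inner_diff_right inner_commute)
      also have "- e s * (inner (U s) (U s) + g s - inner zs zs) \<le> e s * ((norm zs)\<^sup>2 - g s)"
        using epos[OF that] by (simp add: power2_norm_eq_inner algebra_simps)
      finally show ?thesis .
    qed
    define G where "G s = max (g s) K0" for s
    have "G t \<le> G t0"
    proof (rule dini_mono[OF that])
      show "continuous_on {t0..t} G"
        unfolding G_def[abs_def]
        by (intro continuous_intros continuous_on_subset[OF gcont]) auto
      fix s \<eta> :: real assume s: "t0 \<le> s" "s < t" and eta: "\<eta> > 0"
      show "eventually (\<lambda>h. G (s + h) \<le> G s + \<eta> * h) (at_right 0)"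
      proof (cases "g s \<ge> K0")
        case True
        have "2 * inner (U s - zs) (V s) \<le> 0"
          using gneg[OF s(1)] epos[OF s(1)] True
          by (smt (verit, best) K0_def max.cobounded2 mult_nonneg_nonpos)
        from dq_to_dini[OF _ real_dq_lim[OF gder[OF s(1)] s(1)] this eta]
        have "eventually (\<lambda>h. g (s + h) \<le> g s + \<eta> * h) (at_right 0)" by simp
        with eventually_at_right_less[of "0::real"]
        show ?thesis
        proof eventually_elim
          case (elim h)
          then have "0 \<le> \<eta> * h" using eta by simp
          then show ?case using True elim by (auto simp: G_def)
        qed
      next
        case False
        have "((\<lambda>h. g (s + h)) \<longlongrightarrow> g s) (at_right 0)"
          by (rule cont_shift[OF gcont s(1)])
        then have "eventually (\<lambda>h. g (s + h) < K0) (at_right 0)"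
          using False by (intro order_tendstoD) auto
        with eventually_at_right_less[of "0::real"]
        show ?thesis
        proof eventually_elim
          case (elim h)
          then show ?case using False eta by (auto simp: G_def)
        qed
      qed
    qed
    moreover have "g t0 \<le> K0" by (simp add: g_def K0_def power2_norm_eq_inner)
    ultimately have "g t \<le> K0" by (simp add: G_def)
    then show ?thesis by (simp add: g_def power2_norm_eq_inner)
  qed
  define B where "B = norm zs + sqrt K0"
  have Ubound: "norm (U t) \<le> B" if "t \<ge> t0" for t
  proof -
    have "norm (U t - zs) \<le> sqrt K0" using gbound[OF that] by (simp add: real_le_rsqrt)
    then show ?thesis using norm_triangle_ineq[of "U t - zs" zs] by (simp add: B_def)
  qed
  obtain KL where KL: "\<And>u v. norm (fst u) \<le> B \<Longrightarrow> norm (fst v) \<le> B \<Longrightarrow>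
      norm (Tm u - Tm v) \<le> KL * norm (u - v)"
  proof -
    obtain L where L: "\<forall>u\<in>cball 0 B. \<forall>v\<in>cball 0 B. norm (gradf u - gradf v) \<le> L * norm (u - v)"
      using grad_lip[OF bounded_cball] by blast
    then have L': "\<forall>u\<in>cball 0 B. \<forall>v\<in>cball 0 B. norm (gradf u - gradf v) \<le> max L 0 * norm (u - v)"
      by (meson max.cobounded1 mult_right_mono norm_ge_zero order_trans)
    obtain K where "\<And>u v. fst u \<in> cball 0 B \<Longrightarrow> fst v \<in> cball 0 B \<Longrightarrow>
      norm (Top gradf A Aadj b u - Top gradf A Aadj b v) \<le> K * norm (u - v)"
      using Top_lip[OF A_lin A_adj _ L'] by auto
    then show ?thesis using that unfolding Tm_def by (metis mem_cball_0)
  qed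
  define t1 where "t1 = max t0 1"
  obtain C where C: "\<And>t. t \<ge> t1 \<Longrightarrow> norm (V t) \<le> C / t powr p"
  proof -
    define th1 where "th1 s = p * s powr (p - 1)" for s :: real
    define al where "al s = (s powr p)\<^sup>2 / 2" for s :: real
    define P where "P s = th1 s / 2 * (B\<^sup>2 - inner (U s) (U s))" for s
    define Lam where "Lam s = al s * (norm (V s))\<^sup>2 + P s" for s
    have t1t0: "t1 \<ge> t0" "t1 \<ge> 1" by (auto simp: t1_def)
    have th1_nonneg: "th1 s \<ge> 0" for s using p_pos by (simp add: th1_def)
    have P_nonneg: "P s \<ge> 0" if "s \<ge> t0" for s
    proof -
      have "inner (U s) (U s) \<le> B\<^sup>2"
        using Ubound[OF that] by (simp add: power2_norm_eq_inner[symmetric] power_mono)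
      then show ?thesis using th1_nonneg[of s] by (simp add: P_def)
    qed
    have Lam_mono: "Lam t \<le> Lam t1" if "t \<ge> t1" for t
    proof (rule dini_mono[OF that])
      show "continuous_on {t1..t} Lam"
        unfolding Lam_def[abs_def] al_def P_def th1_def
        using t1t0 t0_pos
        by (intro continuous_intros continuous_on_subset[OF Vcont] continuous_on_subset[OF Ucont]) auto
      fix s \<eta> :: real assume s: "t1 \<le> s" "s < t" and eta: "\<eta> > 0"
      have st0: "s \<ge> t0" and s1: "s \<ge> 1" and spos: "s > 0" using s t1t0 t0_pos by auto
      define th where "th = s powr p"
      have thpos: "th > 0" using spos by (simp add: th_def)
      define e' where "e' = - th1 s / th\<^sup>2"
      define th2 where "th2 = p * ((p - 1) * s powr (p - 2))"
      define P' where "P' = th2 / 2 * (B\<^sup>2 - inner (U s) (U s)) + th1 s / 2 * (- (2 * inner (U s) (V s)))"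
      define Dl where "Dl h = U (s + h) - U s" for h
      define w where "w h = e (s + h) *\<^sub>R U (s + h) - e s *\<^sub>R U s" for h
      define r where "r h = V s - (1 / h) *\<^sub>R Dl h" for h
      define Y1 where "Y1 h = 2 * KL * norm ((1 / h) *\<^sub>R Dl h) * norm (r h)
        - 2 * inner ((1 / h) *\<^sub>R w h) (V s)
        + norm (V (s + h) - V s) * (KL * norm ((1 / h) *\<^sub>R Dl h) + norm ((1 / h) *\<^sub>R w h))" for h
      define Y where "Y h = (al (s + h) - al s) / h * (norm (V (s + h)))\<^sup>2 + al s * Y1 h
        + (P (s + h) - P s) / h" for h
      define Q where "Q = th * th1 s * (norm (V s))\<^sup>2
        + al s * (- 2 * inner (e s *\<^sub>R V s + e' *\<^sub>R U s) (V s)) + P'"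
      have ineq: "eventually (\<lambda>h. (Lam (s + h) - Lam s) / h \<le> Y h) (at_right 0)"
        using eventually_at_right_less[of "0::real"]
      proof eventually_elim
        case (elim h)
        have sh: "s + h \<ge> t0" using st0 elim by simp
        have fb: "norm (fst (U q)) \<le> B" if "q \<ge> t0" for q
          using Ubound[OF that] norm_fst_le[of "x q" "lam q"] by (simp add: U_def)
        have step: "(norm (V (s + h)))\<^sup>2 - (norm (V s))\<^sup>2 \<le> h * Y1 h"
          unfolding Y1_def
        proof (rule step_ineq[OF elim])
          show "V (s + h) - V s = - (Tm (U (s + h)) - Tm (U s)) - w h"
            unfolding ode[OF sh] ode[OF st0] w_def by (simp add: algebra_simps)
          show "inner (Tm (U (s + h)) - Tm (U s)) (Dl h) \<ge> 0"
            unfolding Dl_def by (rule mono)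
          show "norm (Tm (U (s + h)) - Tm (U s)) \<le> KL * norm (Dl h)"
            unfolding Dl_def by (rule KL[OF fb[OF sh] fb[OF st0]])
        qed (simp add: r_def)
        have alnn: "al s \<ge> 0" by (simp add: al_def)
        have "Lam (s + h) - Lam s = (al (s + h) - al s) * (norm (V (s + h)))\<^sup>2
            + al s * ((norm (V (s + h)))\<^sup>2 - (norm (V s))\<^sup>2) + (P (s + h) - P s)"
          by (simp add: Lam_def algebra_simps)
        also have "\<dots> \<le> (al (s + h) - al s) * (norm (V (s + h)))\<^sup>2
            + al s * (h * Y1 h) + (P (s + h) - P s)"
          using mult_left_mono[OF step alnn] by simp
        also have "\<dots> = h * Y h"
          using elim by (simp add: Y_def field_simps)
        finally show ?case using elim by (simp add: pos_divide_le_eq mult.commute)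
      qed
      have lim: "(Y \<longlongrightarrow> Q) (at_right 0)"
      proof -
        have lV: "((\<lambda>h. V (s + h)) \<longlongrightarrow> V s) (at_right 0)" by (rule cont_shift[OF Vcont st0])
        have lD: "((\<lambda>h. (1 / h) *\<^sub>R Dl h) \<longlongrightarrow> V s) (at_right 0)"
          unfolding Dl_def by (rule dq_lim[OF Uder[OF st0] st0])
        have eder: "(e has_real_derivative e') (at s within {t0..})"
          unfolding e_def[abs_def] e'_def th1_def th_def by (rule e_deriv[OF spos])
        have lw: "((\<lambda>h. (1 / h) *\<^sub>R w h) \<longlongrightarrow> e s *\<^sub>R V s + e' *\<^sub>R U s) (at_right 0)"
          unfolding w_def
          by (rule dq_lim[OF has_vector_derivative_scaleR[OF eder Uder[OF st0]] st0])
        have alder: "(al has_real_derivative th * th1 s) (at s within {t0..})"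
          unfolding al_def[abs_def] th_def th1_def by (rule alpha_deriv[OF spos])
        have lal: "((\<lambda>h. (al (s + h) - al s) / h) \<longlongrightarrow> th * th1 s) (at_right 0)"
          by (rule real_dq_lim[OF alder st0])
        have Pder: "(P has_real_derivative P') (at s within {t0..})"
        proof -
          have "((\<lambda>s. p * s powr (p - 1) / 2 * (B\<^sup>2 - inner (U s) (U s))) has_real_derivative
            (p * ((p - 1) * s powr (p - 2)) / 2 * (B\<^sup>2 - inner (U s) (U s))
             + (0 - 2 * inner (U s) (V s)) * (p * s powr (p - 1) / 2))) (at s within {t0..})"
            by (rule DERIV_mult[OF DERIV_cdivide[OF theta1_deriv[OF spos]]
                  DERIV_diff[OF DERIV_const inner_self_deriv[OF Uder[OF st0]]]])
          then show ?thesis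
            unfolding P_def[abs_def] P'_def th2_def th1_def by (simp add: algebra_simps)
        qed
        have lP: "((\<lambda>h. (P (s + h) - P s) / h) \<longlongrightarrow> P') (at_right 0)"
          by (rule real_dq_lim[OF Pder st0])
        have "(Y \<longlongrightarrow> th * th1 s * (norm (V s))\<^sup>2 + al s * (2 * KL * norm (V s) * norm (V s - V s)
            - 2 * inner (e s *\<^sub>R V s + e' *\<^sub>R U s) (V s)
            + norm (V s - V s) * (KL * norm (V s) + norm (e s *\<^sub>R V s + e' *\<^sub>R U s))) + P') (at_right 0)"
          unfolding Y_def Y1_def r_def by (intro tendsto_intros lV lD lw lal lP)
        then show ?thesis by (simp add: Q_def)
      qed
      have Qle: "Q \<le> 0"
      proof -
        have es: "e s = 1 / th" by (simp add: e_def th_def)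
        have alth: "al s = th\<^sup>2 / 2" by (simp add: al_def th_def)
        have "al s * (- 2 * inner (e s *\<^sub>R V s + e' *\<^sub>R U s) (V s))
            = - th * (norm (V s))\<^sup>2 + th1 s * inner (U s) (V s)"
        proof -
          have "inner (e s *\<^sub>R V s + e' *\<^sub>R U s) (V s) = e s * inner (V s) (V s) + e' * inner (U s) (V s)"
            by (simp add: inner_add_left)
          then show ?thesis
            using thpos unfolding alth es e'_def power2_norm_eq_inner
            by (simp add: field_simps power2_eq_square)
        qed
        then have Qeq: "Q = th * (th1 s - 1) * (norm (V s))\<^sup>2 + th2 / 2 * (B\<^sup>2 - inner (U s) (U s))"
          by (simp add: Q_def P'_def algebra_simps)
        have "s powr (p - 1) \<le> 1 powr (p - 1)"
          by (rule powr_mono2') (use p_le s1 in auto)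
        then have "th1 s \<le> 1"
          using p_le p_pos by (simp add: th1_def mult_le_one)
        then have a1: "th * (th1 s - 1) * (norm (V s))\<^sup>2 \<le> 0"
          using thpos by (simp add: mult_nonneg_nonpos mult_nonpos_nonneg)
        have "th2 \<le> 0"
        proof -
          have "(p - 1) * s powr (p - 2) \<le> 0" using p_le by (simp add: mult_nonpos_nonneg)
          then show ?thesis using p_pos unfolding th2_def by (simp add: mult_nonneg_nonpos)
        qed
        moreover have "inner (U s) (U s) \<le> B\<^sup>2"
          using Ubound[OF st0] by (simp add: power2_norm_eq_inner[symmetric] power_mono)
        ultimately have a2: "th2 / 2 * (B\<^sup>2 - inner (U s) (U s)) \<le> 0"
          by (simp add: mult_nonpos_nonneg)
        show ?thesis using a1 a2 Qeq by linarith
      qed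
      show "eventually (\<lambda>h. Lam (s + h) \<le> Lam s + \<eta> * h) (at_right 0)"
        by (rule dq_to_dini[OF ineq lim Qle eta])
    qed
    define C where "C = sqrt (2 * Lam t1)"
    show ?thesis
    proof (rule that)
      fix t assume t: "t \<ge> t1"
      then have tt0: "t \<ge> t0" and tpos: "t > 0" using t1t0 t0_pos by auto
      have "al t * (norm (V t))\<^sup>2 \<le> Lam t1"
        using Lam_mono[OF t] P_nonneg[OF tt0] by (simp add: Lam_def)
      then have "(t powr p * norm (V t))\<^sup>2 \<le> 2 * Lam t1"
        by (simp add: al_def power_mult_distrib)
      then have "t powr p * norm (V t) \<le> C"
        unfolding C_def by (rule real_le_rsqrt)
      then show "norm (V t) \<le> C / t powr p"
        using tpos by (simp add: field_simps)
    qed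
  qed
  define C3 where "C3 = C + B + norm zs"
  have key: "norm (V t + e t *\<^sub>R (U t - z t)) \<le> C3 / t powr p"
       "V t + e t *\<^sub>R (U t - z t) = - (Tm (U t) - Tm (z t))" if "t \<ge> t1" for t
  proof -
    have t0t: "t \<ge> t0" using that by (simp add: t1_def)
    have tpos: "t > 0" using t0t t0_pos by simp
    have Tz: "Tm (z t) = - (e t *\<^sub>R z t)"
      using z_zero[OF t0t] by (simp add: Tm_def e_def eq_neg_iff_add_eq_0)
    show eq: "V t + e t *\<^sub>R (U t - z t) = - (Tm (U t) - Tm (z t))"
      using ode[OF t0t] Tz by (simp add: algebra_simps)
    have "norm (V t + e t *\<^sub>R (U t - z t)) \<le> norm (V t) + e t * (norm (U t) + norm (z t))"
      using norm_triangle_ineq[of "V t" "e t *\<^sub>R (U t - z t)"] norm_triangle_ineq4[of "U t" "z t"]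
        epos[OF t0t]
      by (smt (verit) mult_left_mono norm_scaleR)
    also have "\<dots> \<le> C / t powr p + (1 / t powr p) * (B + norm zs)"
      using C[OF that] Ubound[OF t0t] zbound[OF t0t] epos[OF t0t] unfolding e_def
      by (intro add_mono mult_left_mono) auto
    also have "\<dots> = C3 / t powr p" by (simp add: C3_def add_divide_distrib)
    finally show "norm (V t + e t *\<^sub>R (U t - z t)) \<le> C3 / t powr p" .
  qed
  have fin: "(norm (V t + e t *\<^sub>R (U t - z t)))\<^sup>2 \<le> C3\<^sup>2 *
      norm (exp (- 2 * integral {t0..t} (\<lambda>s. 1 / s powr p)) + 1 / t powr (2 * p))"
    if "t \<ge> t1" for t
  proof -
    have tpos: "t > 0" using that t0_pos unfolding t1_def by linarith
    have p2: "2 * p = p + p" by simp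
    have sq: "(t powr p)\<^sup>2 = t powr (2 * p)"
      unfolding power2_eq_square p2 by (simp only: powr_add)
    have "(norm (V t + e t *\<^sub>R (U t - z t)))\<^sup>2 \<le> (C3 / t powr p)\<^sup>2"
      by (rule power_mono[OF key(1)[OF that]]) simp
    also have "(C3 / t powr p)\<^sup>2 = C3\<^sup>2 * (1 / t powr (2 * p))"
      by (simp add: power_divide sq)
    also have "C3\<^sup>2 * (1 / t powr (2 * p)) \<le> C3\<^sup>2 * norm (exp (- 2 * integral {t0..t} (\<lambda>s. 1 / s powr p)) + 1 / t powr (2 * p))"
      by (rule mult_left_mono[OF real_le_norm_add_pos]) auto
    finally show ?thesis .
  qed
  have ev: "eventually (\<lambda>t. t \<ge> t1) at_top" by simp
  show ?thesis
  proof
    show "(\<lambda>t. (norm ((x' t, lam' t) + (1 / t powr p) *\<^sub>R ((x t, lam t) - z t)))\<^sup>2)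
           \<in> O[at_top](\<lambda>t. exp (- 2 * integral {t0..t} (\<lambda>s. 1 / s powr p)) + 1 / t powr (2 * p))"
      by (rule bigoI[where c = "C3\<^sup>2"]) (use ev in \<open>eventually_elim\<close>, use fin in \<open>auto simp: U_def V_def e_def\<close>)
    show "(\<lambda>t. (norm (Top gradf A Aadj b (x t, lam t) - Top gradf A Aadj b (z t)))\<^sup>2)
           \<in> O[at_top](\<lambda>t. exp (- 2 * integral {t0..t} (\<lambda>s. 1 / s powr p)) + 1 / t powr (2 * p))"
    proof (rule bigoI[where c = "C3\<^sup>2"])
      show "eventually (\<lambda>t. norm ((norm (Top gradf A Aadj b (x t, lam t) - Top gradf A Aadj b (z t)))\<^sup>2)
        \<le> C3\<^sup>2 * norm (exp (- 2 * integral {t0..t} (\<lambda>s. 1 / s powr p)) + 1 / t powr (2 * p))) at_top"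
        using ev
      proof eventually_elim
        case (elim t)
        have "norm (Top gradf A Aadj b (x t, lam t) - Top gradf A Aadj b (z t))
            = norm (V t + e t *\<^sub>R (U t - z t))"
          using key(2)[OF elim] by (simp add: Tm_def U_def norm_minus_commute)
        then show ?case using fin[OF elim] by simp
      qed
    qed
  qed
qed

end
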